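(* Consider an $(n+2)$-dimensional ($n\ge1$) static spherically symmetric spacetime with line element $ds^2=-F(r)dt^2+G(r)dr^2+r^2d\ell^2_{S^n}$, solving Einstein's equations $G_{ab}+\Lambda g_{ab}=8\pi T_{ab}$ with energy-momentum tensor $T^b_a=\mathrm{diag}\{-\rho(r),p_r(r),p_\theta(r),\dots,p_\theta(r)\}$ satisfying the dominant energy condition $|p_r(r)|,|p_\theta(r)|\le\rho(r)<+\infty$. Suppose $0<F(r),G(r)<+\infty$ on an interval $(r_i^-,r_i^+)\subset(0,+\infty)$ with $F,F',G\in C^1((r_i^-,r_i^+))$. Then: (i) $F(r)G(r)$ is a nondecreasing function of $r$ on $(r_i^-,r_i^+)$, and hence bounded in a neighbourhood of $r_i^-$; (ii) in the outer region $(r_m^-,+\infty)$ of an asymptotically flat spacetime (i.e. $0<F,G<\infty$ on $(r_m^-,+\infty)$ and $\lim_{r\to+\infty}F(r)=\lim_{r\to+\infty}G(r)=1$), $F(r)G(r)$ is bounded.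
   Context: $d\ell^2_{S^n}$ is the round metric on the unit sphere $S^n$, $G_{ab}$ the Einstein tensor of the metric, $\Lambda$ the cosmological constant. *)

theory Defs
  imports "HOL-Analysis.Analysis"
begin

text \<open>Metric ds^2 = -F dt^2 + G dr^2 + r^2 dl^2_{S^n}.  F1, F2 are the first and
second derivatives of F, G1 the first derivative of G.  Below are the mixed
components G^t_t, G^r_r, G^theta_theta of the Einstein tensor of this metric
(all angular components coincide).\<close>

definition einstein_tt :: "nat \<Rightarrow> (real \<Rightarrow> real) \<Rightarrow> (real \<Rightarrow> real) \<Rightarrow> real \<Rightarrow> real" where
  "einstein_tt n G G1 r =
     - (real n * (real n - 1)) / (2 * r^2) * (1 - 1 / G r)
     - real n * G1 r / (2 * r * (G r)^2)"

definition einstein_rr :: "nat \<Rightarrow> (real \<Rightarrow> real) \<Rightarrow> (real \<Rightarrow> real) \<Rightarrow> (real \<Rightarrow> real) \<Rightarrow> real \<Rightarrow> real" where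
  "einstein_rr n F F1 G r =
     - (real n * (real n - 1)) / (2 * r^2) * (1 - 1 / G r)
     + real n * F1 r / (2 * r * F r * G r)"

definition einstein_angular ::
  "nat \<Rightarrow> (real \<Rightarrow> real) \<Rightarrow> (real \<Rightarrow> real) \<Rightarrow> (real \<Rightarrow> real) \<Rightarrow> (real \<Rightarrow> real) \<Rightarrow> (real \<Rightarrow> real) \<Rightarrow> real \<Rightarrow> real" where
  "einstein_angular n F F1 F2 G G1 r =
     - ((real n - 1) * (real n - 2)) / (2 * r^2) * (1 - 1 / G r)
     + (1 / G r) * ( F2 r / (2 * F r) - (F1 r)^2 / (4 * (F r)^2) - F1 r * G1 r / (4 * F r * G r)
                     + (real n - 1) * (F1 r / (2 * F r) - G1 r / (2 * G r)) / r)"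

definition static_sph_solution ::
  "nat \<Rightarrow> real \<Rightarrow> (real \<Rightarrow> real) \<Rightarrow> (real \<Rightarrow> real) \<Rightarrow> (real \<Rightarrow> real) \<Rightarrow> (real \<Rightarrow> real) \<Rightarrow> (real \<Rightarrow> real)
   \<Rightarrow> (real \<Rightarrow> real) \<Rightarrow> (real \<Rightarrow> real) \<Rightarrow> (real \<Rightarrow> real) \<Rightarrow> real set \<Rightarrow> bool" where
  "static_sph_solution n \<Lambda> F F1 F2 G G1 \<rho> pr p\<theta> S \<longleftrightarrow>
     (\<forall>r\<in>S. 0 < F r \<and> 0 < G r
        \<and> (F has_real_derivative F1 r) (at r)
        \<and> (F1 has_real_derivative F2 r) (at r)
        \<and> (G has_real_derivative G1 r) (at r)
        \<and> einstein_tt n G G1 r + \<Lambda> = 8 * pi * (- \<rho> r)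
        \<and> einstein_rr n F F1 G r + \<Lambda> = 8 * pi * pr r
        \<and> einstein_angular n F F1 F2 G G1 r + \<Lambda> = 8 * pi * p\<theta> r
        \<and> \<bar>pr r\<bar> \<le> \<rho> r \<and> \<bar>p\<theta> r\<bar> \<le> \<rho> r)
     \<and> continuous_on S F2 \<and> continuous_on S G1"

end

theory Submission
  imports Defs
begin

lemma deriv_nonneg:
  fixes F F1 F2 G G1 \<rho> pr p\<theta> :: "real \<Rightarrow> real"
  assumes n: "n \<ge> 1" and sol: "static_sph_solution n \<Lambda> F F1 F2 G G1 \<rho> pr p\<theta> S"
    and r: "r \<in> S" and rpos: "r > 0"
  shows "((\<lambda>r. F r * G r) has_real_derivative (F1 r * G r + F r * G1 r)) (at r)
         \<and> F1 r * G r + F r * G1 r \<ge> 0"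
proof -
  from sol r have F: "0 < F r" and Gp: "0 < G r"
    and dF: "(F has_real_derivative F1 r) (at r)" and dG: "(G has_real_derivative G1 r) (at r)"
    and tt: "einstein_tt n G G1 r + \<Lambda> = 8 * pi * (- \<rho> r)"
    and rr: "einstein_rr n F F1 G r + \<Lambda> = 8 * pi * pr r"
    and dec: "\<bar>pr r\<bar> \<le> \<rho> r"
    unfolding static_sph_solution_def by auto
  have d: "((\<lambda>r. F r * G r) has_real_derivative (F1 r * G r + F r * G1 r)) (at r)"
    using DERIV_mult[OF dF dG] by (simp add: mult.commute)
  have "einstein_rr n F F1 G r - einstein_tt n G G1 r = 8 * pi * (pr r + \<rho> r)"
    using tt rr by (simp add: algebra_simps)
  also have "\<dots> \<ge> 0" using dec by (intro mult_nonneg_nonneg) auto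
  finally have ge: "real n * F1 r / (2 * r * F r * G r) + real n * G1 r / (2 * r * (G r)^2) \<ge> 0"
    unfolding einstein_rr_def einstein_tt_def by simp
  have eq: "real n * F1 r / (2 * r * F r * G r) + real n * G1 r / (2 * r * (G r)^2)
      = (real n / (2 * r * F r * (G r)^2)) * (F1 r * G r + F r * G1 r)"
    using F Gp rpos by (simp add: field_simps power2_eq_square)
  have pos: "real n / (2 * r * F r * (G r)^2) > 0" using n F Gp rpos by simp
  have "F1 r * G r + F r * G1 r \<ge> 0"
    using ge pos unfolding eq by (metis zero_le_mult_iff not_less)
  with d show ?thesis by simp
qed

lemma mono_part:
  fixes F F1 F2 G G1 \<rho> pr p\<theta> :: "real \<Rightarrow> real"
  assumes n: "n \<ge> 1" and sol: "static_sph_solution n \<Lambda> F F1 F2 G G1 \<rho> pr p\<theta> S"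
    and S: "\<And>x y z. x \<in> S \<Longrightarrow> y \<in> S \<Longrightarrow> x \<le> z \<Longrightarrow> z \<le> y \<Longrightarrow> z \<in> S"
    and Spos: "\<And>x. x \<in> S \<Longrightarrow> x > 0"
  shows "mono_on S (\<lambda>r. F r * G r)"
proof (rule mono_onI)
  fix x y assume x: "x \<in> S" and y: "y \<in> S" and xy: "x \<le> y"
  have inS: "z \<in> S" if "x \<le> z" "z \<le> y" for z using S[OF x y that] .
  show "F x * G x \<le> F y * G y"
  proof (rule DERIV_nonneg_imp_increasing_open[OF xy])
    fix z assume "x < z" "z < y"
    then have "z \<in> S" using inS by auto
    then show "\<exists>d. ((\<lambda>r. F r * G r) has_real_derivative d) (at z) \<and> 0 \<le> d"
      using deriv_nonneg[OF n sol _ Spos] by blast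
  next
    have "\<forall>z\<in>{x..y}. isCont (\<lambda>r. F r * G r) z"
    proof
      fix z assume "z \<in> {x..y}"
      then have "z \<in> S" using inS by auto
      then show "isCont (\<lambda>r. F r * G r) z"
        using deriv_nonneg[OF n sol _ Spos] DERIV_isCont by blast
    qed
    then show "continuous_on {x..y} (\<lambda>r. F r * G r)"
      by (simp add: continuous_at_imp_continuous_on)
  qed
qed

theorem lemma5p1:
  fixes n :: nat and \<Lambda> :: real
    and F F1 F2 G G1 \<rho> pr p\<theta> :: "real \<Rightarrow> real"
  assumes "n \<ge> 1"
  shows "(\<forall>a b. 0 \<le> a \<and> a < b \<and> static_sph_solution n \<Lambda> F F1 F2 G G1 \<rho> pr p\<theta> {a<..<b} \<longrightarrow>
            mono_on {a<..<b} (\<lambda>r. F r * G r) \<and>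
            (\<exists>\<epsilon>>0. \<exists>M. \<forall>r\<in>{a<..<min b (a + \<epsilon>)}. \<bar>F r * G r\<bar> \<le> M))
       \<and> (\<forall>c. 0 \<le> c \<and> static_sph_solution n \<Lambda> F F1 F2 G G1 \<rho> pr p\<theta> {c<..}
              \<and> (F \<longlongrightarrow> 1) at_top \<and> (G \<longlongrightarrow> 1) at_top \<longrightarrow>
            (\<exists>M. \<forall>r\<in>{c<..}. \<bar>F r * G r\<bar> \<le> M))"
proof (intro conjI allI impI)
  fix a b assume h: "0 \<le> a \<and> a < b \<and> static_sph_solution n \<Lambda> F F1 F2 G G1 \<rho> pr p\<theta> {a<..<b}"
  then have sol: "static_sph_solution n \<Lambda> F F1 F2 G G1 \<rho> pr p\<theta> {a<..<b}" and ab: "0 \<le> a" "a < b" by auto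
  show mono: "mono_on {a<..<b} (\<lambda>r. F r * G r)"
    by (rule mono_part[OF assms sol]) (use ab in auto)
  let ?e = "(b - a) / 2"
  have pos: "\<And>r. r \<in> {a<..<b} \<Longrightarrow> F r * G r > 0"
    using sol unfolding static_sph_solution_def by auto
  have m: "a + ?e \<in> {a<..<b}" using ab by (auto simp: field_simps)
  show "\<exists>\<epsilon>>0. \<exists>M. \<forall>r\<in>{a<..<min b (a + \<epsilon>)}. \<bar>F r * G r\<bar> \<le> M"
  proof (intro exI conjI ballI)
    show "?e > 0" using ab by auto
  next
    fix r assume r: "r \<in> {a<..<min b (a + ?e)}"
    then have rin: "r \<in> {a<..<b}" by auto
    have "F r * G r \<le> F (a + ?e) * G (a + ?e)"
      using mono_onD[OF mono rin m] r by auto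
    then show "\<bar>F r * G r\<bar> \<le> F (a + ?e) * G (a + ?e)" using pos[OF rin] by simp
  qed
next
  fix c assume h: "0 \<le> c \<and> static_sph_solution n \<Lambda> F F1 F2 G G1 \<rho> pr p\<theta> {c<..}
              \<and> (F \<longlongrightarrow> 1) at_top \<and> (G \<longlongrightarrow> 1) at_top"
  then have sol: "static_sph_solution n \<Lambda> F F1 F2 G G1 \<rho> pr p\<theta> {c<..}" and c: "0 \<le> c"
    and lim: "((\<lambda>r. F r * G r) \<longlongrightarrow> 1) at_top"
    using tendsto_mult[of F 1 at_top G 1] by auto
  have mono: "mono_on {c<..} (\<lambda>r. F r * G r)"
    by (rule mono_part[OF assms sol]) (use c in auto)
  have pos: "\<And>r. r \<in> {c<..} \<Longrightarrow> F r * G r > 0"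
    using sol unfolding static_sph_solution_def by auto
  show "\<exists>M. \<forall>r\<in>{c<..}. \<bar>F r * G r\<bar> \<le> M"
  proof (intro exI ballI)
    fix r assume r: "r \<in> {c<..}"
    have ev: "eventually (\<lambda>s. F r * G r \<le> F s * G s) at_top"
      using eventually_ge_at_top[of r]
      by eventually_elim (use r in \<open>auto intro!: mono_onD[OF mono]\<close>)
    have "F r * G r \<le> 1"
      by (rule tendsto_lowerbound[OF lim ev]) simp
    then show "\<bar>F r * G r\<bar> \<le> 1" using pos[OF r] by simp
  qed
qed

end
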